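(* Let $S_A = A_{II} - A_{IL}A_{LL}^{-1}A_{LI}$ and $S_M = M_{II} - A_{IL}A_{LL}^{-1}A_{LI}$. Then $M^{-1}A$ has (at least) $N_L$ eigenvalues equal to 1, with eigenvectors $\vec{e}^{(k)}$ for $1\leq k \leq N_L$. The other $N_I$ eigenvalues are the eigenvalues of $S_M^{-1}S_A$.
   Context: Let $A$ be an $N\times N$ matrix (in the paper, the upwind finite-difference discretization matrix of $-\varepsilon u'' - c(x)u' + r(x)u = f$ on $(0,1)$ with homogeneous Dirichlet conditions, on a mesh $0=x_0<\dots<x_N=1$). Partition the unknowns into a layer set $L$ (the first $N_L$ indices, meshpoints where meshwidths are $\mathcal{O}(\varepsilon/N)$, including the transition point) and an interior set $I$ (the remaining $N_I$ indices, meshwidths $\mathcal{O}(1/N)$), with $N = N_L + N_I$, so that $A = \begin{bmatrix} A_{LL} & A_{LI} \\ A_{IL} & A_{II}\end{bmatrix}$. Let $M_{II}$ be the upper triangular part (including the diagonal) of $A_{II}$, and define the preconditioner $M = \begin{bmatrix} A_{LL} & A_{LI} \\ A_{IL} & M_{II}\end{bmatrix}$. $\vec{e}^{(k)}$ denotes the $k$-th canonical unit vector of length $N$. The relevant matrices ($A_{LL}$, $S_A$, $S_M$) are assumed invertible. *)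

theory Defs
  imports "Jordan_Normal_Form.Gauss_Jordan_Elimination" "Jordan_Normal_Form.Char_Poly"
begin

text \<open>Inverse of a square matrix over a field (meaningful when the matrix is invertible).\<close>
definition minv :: "'a :: field mat \<Rightarrow> 'a mat" where
  "minv A = the (mat_inverse A)"

text \<open>Blocks of an (NL+NI) x (NL+NI) matrix w.r.t. the partition L = first NL indices,
  I = remaining indices.\<close>
definition blk_LL :: "'a mat \<Rightarrow> nat \<Rightarrow> 'a mat" where
  "blk_LL A NL = (case split_block A NL NL of (B,_,_,_) \<Rightarrow> B)"
definition blk_LI :: "'a mat \<Rightarrow> nat \<Rightarrow> 'a mat" where
  "blk_LI A NL = (case split_block A NL NL of (_,B,_,_) \<Rightarrow> B)"
definition blk_IL :: "'a mat \<Rightarrow> nat \<Rightarrow> 'a mat" where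
  "blk_IL A NL = (case split_block A NL NL of (_,_,B,_) \<Rightarrow> B)"
definition blk_II :: "'a mat \<Rightarrow> nat \<Rightarrow> 'a mat" where
  "blk_II A NL = (case split_block A NL NL of (_,_,_,B) \<Rightarrow> B)"

definition upper_part :: "'a :: zero mat \<Rightarrow> 'a mat" where
  "upper_part B = mat (dim_row B) (dim_col B) (\<lambda>(i,j). if i \<le> j then B $$ (i,j) else 0)"

definition precond :: "'a :: zero mat \<Rightarrow> nat \<Rightarrow> 'a mat" where
  "precond A NL = four_block_mat (blk_LL A NL) (blk_LI A NL) (blk_IL A NL) (upper_part (blk_II A NL))"

definition schur_A :: "'a :: field mat \<Rightarrow> nat \<Rightarrow> 'a mat" where
  "schur_A A NL = blk_II A NL - blk_IL A NL * minv (blk_LL A NL) * blk_LI A NL"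
definition schur_M :: "'a :: field mat \<Rightarrow> nat \<Rightarrow> 'a mat" where
  "schur_M A NL = upper_part (blk_II A NL) - blk_IL A NL * minv (blk_LL A NL) * blk_LI A NL"

end

theory Submission
  imports Defs
begin

lemma invertible_det_nz:
  fixes B :: "'a :: field mat"
  assumes "invertible_mat B" "B \<in> carrier_mat n n"
  shows "det B \<noteq> 0"
proof -
  from assms obtain C where BC: "B * C = 1\<^sub>m n" and CB: "C * B = 1\<^sub>m (dim_row C)"
    unfolding invertible_mat_def inverts_mat_def by auto
  have "dim_col C = n" using BC by (metis index_mult_mat(3) index_one_mat(3))
  moreover have "dim_row C = n" using CB assms(2)
    by (metis carrier_matD(2) index_mult_mat(3) index_one_mat(3))
  ultimately have C: "C \<in> carrier_mat n n" by auto
  have "det B * det C = 1" using det_mult[OF assms(2) C] BC by simp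
  thus ?thesis by auto
qed

lemma minv_props:
  fixes B :: "'a :: field mat"
  assumes B: "B \<in> carrier_mat n n" and d: "det B \<noteq> 0"
  shows "minv B \<in> carrier_mat n n" "B * minv B = 1\<^sub>m n" "minv B * B = 1\<^sub>m n"
proof -
  have U: "B \<in> Units (ring_mat TYPE('a) n ())" by (rule det_non_zero_imp_unit[OF B d])
  have "mat_inverse B \<noteq> None" using mat_inverse(1)[OF B, of "()"] U by blast
  then obtain C where C: "mat_inverse B = Some C" by auto
  have m: "minv B = C" unfolding minv_def C by simp
  from mat_inverse(2)[OF B C] show "minv B \<in> carrier_mat n n" "B * minv B = 1\<^sub>m n" "minv B * B = 1\<^sub>m n"
    unfolding m by auto
qed

lemma upper_part_carrier[simp]: "B \<in> carrier_mat n m \<Longrightarrow> upper_part B \<in> carrier_mat n m"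
  unfolding upper_part_def by auto

theorem theorem2p1:
  fixes A :: "real mat" and NL NI N :: nat
  assumes "N = NL + NI"
    and "A \<in> carrier_mat N N"
    and "invertible_mat (blk_LL A NL)"
    and "invertible_mat (schur_A A NL)"
    and "invertible_mat (schur_M A NL)"
  shows "(\<forall>k < NL. eigenvector (minv (precond A NL) * A) (unit_vec N k) 1)
    \<and> char_poly (minv (precond A NL) * A)
        = [:-1, 1:] ^ NL * char_poly (minv (schur_M A NL) * schur_A A NL)"
proof -
  obtain A1 A2 A3 A4 where sb: "split_block A NL NL = (A1,A2,A3,A4)" by (metis prod_cases4)
  have dims: "dim_row A = NL + NI" "dim_col A = NL + NI" using assms(1,2) by auto
  note spl = split_block[OF sb dims]
  have A1: "A1 \<in> carrier_mat NL NL" and A2: "A2 \<in> carrier_mat NL NI"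
    and A3: "A3 \<in> carrier_mat NI NL" and A4: "A4 \<in> carrier_mat NI NI"
    and Aeq: "A = four_block_mat A1 A2 A3 A4" using spl by auto
  have blk: "blk_LL A NL = A1" "blk_LI A NL = A2" "blk_IL A NL = A3" "blk_II A NL = A4"
    unfolding blk_LL_def blk_LI_def blk_IL_def blk_II_def sb by auto
  define U where "U = upper_part A4"
  have U: "U \<in> carrier_mat NI NI" unfolding U_def using A4 by simp
  define C where "C = A3 * minv A1 * A2"
  define SA where "SA = A4 - C"
  define SM where "SM = U - C"
  have d1: "det A1 \<noteq> 0" using invertible_det_nz[OF assms(3)[unfolded blk] A1] .
  note i1 = minv_props[OF A1 d1]
  have C: "C \<in> carrier_mat NI NI" unfolding C_def using A1 A2 A3 i1 by auto
  have SA: "SA \<in> carrier_mat NI NI" unfolding SA_def using A4 C by auto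
  have SM: "SM \<in> carrier_mat NI NI" unfolding SM_def using U C by auto
  have sA: "schur_A A NL = SA" unfolding schur_A_def blk SA_def C_def ..
  have sM: "schur_M A NL = SM" unfolding schur_M_def blk SM_def C_def U_def ..
  have dM: "det SM \<noteq> 0" using invertible_det_nz[OF assms(5)[unfolded sM] SM] .
  note iM = minv_props[OF SM dM]
  define Y where "Y = minv SM * SA"
  have Y: "Y \<in> carrier_mat NI NI" unfolding Y_def using iM SA by auto
  define X where "X = minv A1 * (A2 - A2 * Y)"
  have X: "X \<in> carrier_mat NL NI" unfolding X_def using i1 A2 Y by auto
  define B where "B = four_block_mat (1\<^sub>m NL) X (0\<^sub>m NI NL) Y"
  define M where "M = four_block_mat A1 A2 A3 U"
  have pM: "precond A NL = M" unfolding precond_def blk M_def U_def ..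
  have M: "M \<in> carrier_mat N N" unfolding M_def assms(1) using A1 U by auto
  have B: "B \<in> carrier_mat N N" unfolding B_def assms(1) using X Y by auto
  have AX: "A1 * X = A2 - A2 * Y" unfolding X_def
    using A1 A2 Y i1 by (subst assoc_mult_mat[symmetric, of _ NL NL _ NL _ NI], auto)
  have A3X: "A3 * X = C - C * Y"
  proof -
    define D where "D = minv A1 * A2"
    have D: "D \<in> carrier_mat NL NI" unfolding D_def using i1 A2 by auto
    have CD: "C = A3 * D" unfolding C_def D_def using A3 i1(1) A2 by (rule assoc_mult_mat)
    have "minv A1 * (A2 - A2 * Y) = D - D * Y" unfolding D_def
      using i1 A2 Y by (subst mult_minus_distrib_mat[of _ NL NL _ NI], auto)
    hence "A3 * X = A3 * (D - D * Y)" unfolding X_def by simp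
    also have "\<dots> = A3 * D - A3 * (D * Y)" using A3 D Y by (intro mult_minus_distrib_mat[of _ NI NL _ NI], auto)
    also have "A3 * (D * Y) = A3 * D * Y" using A3 D Y by simp
    finally show ?thesis unfolding CD .
  qed
  have SMY: "SM * Y = SA" unfolding Y_def
    using SM SA iM by (subst assoc_mult_mat[symmetric, of _ NI NI _ NI _ NI], auto)
  have UY: "U * Y - C * Y = SA" using SMY unfolding SM_def
    using U C Y by (simp add: minus_mult_distrib_mat[of _ NI NI])
  have MB: "M * B = A"
  proof -
    have "M * B = four_block_mat (A1 * 1\<^sub>m NL + A2 * 0\<^sub>m NI NL) (A1 * X + A2 * Y)
       (A3 * 1\<^sub>m NL + U * 0\<^sub>m NI NL) (A3 * X + U * Y)"
      unfolding M_def B_def by (rule mult_four_block_mat[OF A1 A2 A3 U _ X _ Y], auto)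
    also have "\<dots> = four_block_mat A1 A2 A3 A4"
    proof (rule cong_four_block_mat)
      show "A1 * 1\<^sub>m NL + A2 * 0\<^sub>m NI NL = A1" using A1 A2 by simp
      show "A3 * 1\<^sub>m NL + U * 0\<^sub>m NI NL = A3" using A3 U by simp
      show "A1 * X + A2 * Y = A2" unfolding AX using A2 Y
        by (intro eq_matI, auto)
      show "A3 * X + U * Y = A4" unfolding A3X
      proof (rule eq_matI)
        fix i j assume ij: "i < dim_row A4" "j < dim_col A4"
        have "(U * Y - C * Y) $$ (i, j) = (A4 - C) $$ (i, j)" using UY unfolding SA_def by simp
        then show "(C - C * Y + U * Y) $$ (i, j) = A4 $$ (i, j)" using ij A4 C U Y by auto
      qed (use A4 C U Y in auto)
    qed
    finally show ?thesis using Aeq by simp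
  qed
  have detM: "det M \<noteq> 0"
  proof -
    define L where "L = four_block_mat (1\<^sub>m NL) (0\<^sub>m NL NI) (A3 * minv A1) (1\<^sub>m NI)"
    define R where "R = four_block_mat A1 A2 (0\<^sub>m NI NL) SM"
    have L: "L \<in> carrier_mat N N" unfolding L_def assms(1) by auto
    have R: "R \<in> carrier_mat N N" unfolding R_def assms(1) using A1 SM by auto
    have "L * R = four_block_mat (1\<^sub>m NL * A1 + 0\<^sub>m NL NI * 0\<^sub>m NI NL) (1\<^sub>m NL * A2 + 0\<^sub>m NL NI * SM)
       (A3 * minv A1 * A1 + 1\<^sub>m NI * 0\<^sub>m NI NL) (A3 * minv A1 * A2 + 1\<^sub>m NI * SM)"
      unfolding L_def R_def by (rule mult_four_block_mat, insert A1 A2 A3 SM i1, auto)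
    also have "\<dots> = M" unfolding M_def
    proof (rule cong_four_block_mat)
      show "1\<^sub>m NL * A1 + 0\<^sub>m NL NI * 0\<^sub>m NI NL = A1" using A1 by simp
      show "1\<^sub>m NL * A2 + 0\<^sub>m NL NI * SM = A2" using A2 SM by simp
      show "A3 * minv A1 * A1 + 1\<^sub>m NI * 0\<^sub>m NI NL = A3" using A3 A1 i1
        by (subst assoc_mult_mat[of _ NI NL _ NL _ NL], auto)
      show "A3 * minv A1 * A2 + 1\<^sub>m NI * SM = U" using SM C U
        unfolding SM_def C_def[symmetric] by (intro eq_matI, auto)
    qed
    finally have LR: "L * R = M" .
    have "det L = 1" unfolding L_def
      by (subst det_four_block_mat_upper_right_zero[of _ NL _ NI], insert A3 i1, auto)
    moreover have "det R = det A1 * det SM" unfolding R_def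
      by (rule det_four_block_mat_lower_left_zero[OF A1 A2 _ SM], simp)
    ultimately have "det M = det A1 * det SM" using det_mult[OF L R] LR by simp
    thus ?thesis using d1 dM by simp
  qed
  note iMM = minv_props[OF M detM]
  have BB: "minv (precond A NL) * A = B" unfolding pM
  proof -
    have "minv M * A = minv M * M * B" using MB iMM M B by (subst assoc_mult_mat[of _ N N _ N _ N], auto)
    also have "\<dots> = B" using iMM B by simp
    finally show "minv M * A = B" .
  qed
  have ev: "eigenvector B (unit_vec N k) 1" if k: "k < NL" for k
  proof -
    have kN: "k < N" using k assms(1) by simp
    have "B *\<^sub>v unit_vec N k = unit_vec N k"
    proof (rule eq_vecI)
      fix i assume i: "i < dim_vec (unit_vec N k)"
      hence iN: "i < N" by simp
      have "(B *\<^sub>v unit_vec N k) $ i = B $$ (i, k)"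
        using B iN kN by (simp add: scalar_prod_right_unit)
      also have "\<dots> = unit_vec N k $ i" unfolding B_def using iN kN k X Y assms(1) by auto
      finally show "(B *\<^sub>v unit_vec N k) $ i = unit_vec N k $ i" .
    qed (use B in auto)
    moreover have "(unit_vec N k :: real vec) \<noteq> 0\<^sub>v N"
    proof
      assume h: "(unit_vec N k :: real vec) = 0\<^sub>v N"
      have "(1::real) = unit_vec N k $ k" using kN by simp
      also have "\<dots> = 0" unfolding h using kN by simp
      finally show False by simp
    qed
    ultimately show ?thesis unfolding eigenvector_def using B by auto
  qed
  have CPM: "char_poly_matrix B = four_block_mat (char_poly_matrix (1\<^sub>m NL))
      (map_mat (\<lambda>a. [:-a:]) X) (0\<^sub>m NI NL) (char_poly_matrix Y)"
    by (intro eq_matI) (insert X Y, auto simp: B_def char_poly_matrix_def)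
  have "char_poly B = det (char_poly_matrix (1\<^sub>m NL)) * det (char_poly_matrix Y)"
    unfolding char_poly_def CPM
    by (rule det_four_block_mat_lower_left_zero[of _ NL _ NI], insert X Y, auto)
  also have "det (char_poly_matrix (1\<^sub>m NL)) = [:-1, 1:] ^ NL"
    unfolding char_poly_def[symmetric]
    by (subst char_poly_upper_triangular[of _ NL], auto simp: prod_list_replicate)
  finally have "char_poly B = [:-1, 1:] ^ NL * char_poly Y" unfolding char_poly_def .
  thus ?thesis using ev unfolding BB sA sM Y_def by auto
qed

end
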